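(* Let $J\subseteq\mathbb R$ be an open interval and let $A:J\to\mathbb R$ be of class $C^3$. Let $x_0\in J$ satisfy $A''(x_0)\neq 0$. Then for every $\epsilon>0$ there exists $\delta=\delta(x_0,A,\epsilon)>0$ such that, setting $I=(x_0-\delta,x_0+\delta)\subset J$ and $\Gamma(I)=\{x+iA(x): x\in I\}$, the following hold for every three-tuple $\mathbf z=(z_1,z_2,z_3)$ of distinct points of $\Gamma(I)$: (a) with $\kappa_0=A''(x_0)/s(x_0)^3$ (the curvature of $\Gamma$ at $z_0=x_0+iA(x_0)$), one has $c^2(\mathbf z)=\kappa_0^2+r(\mathbf z)$ with $|r(\mathbf z)|<\epsilon$; (b) $\bigl|\mathtt S[\mathrm{Re}K_\Gamma](\mathbf z)-\tfrac32 c^2(\mathbf z)\bigr|<\epsilon$ and $\bigl|\mathtt S[\mathrm{Im}K_\Gamma](\mathbf z)+\tfrac12 c^2(\mathbf z)\bigr|<\epsilon$.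
   Context: $\Gamma=\{x+iA(x): x\in J\}$ is the graph curve of $A$, and $s(x)=\sqrt{1+(A'(x))^2}$. The kernel $K_\Gamma$ is defined (with the normalizing factor $1/(2\pi)$ omitted, as in the paper) for $w=x+iA(x)$, $z=y+iA(y)$, $x\neq y$, $x,y\in J$, by $K_\Gamma(w,z)=\dfrac{A'(x)-i}{s(x)\,[\,x-y+i(A(x)-A(y))\,]}$; $\mathrm{Re}K_\Gamma$ and $\mathrm{Im}K_\Gamma$ are its real and imaginary parts. For a function $K$ defined off the diagonal and a three-tuple $\mathbf z=(z_1,z_2,z_3)$ of distinct points, $\mathtt S[K](\mathbf z)=\sum_{\sigma\in S_3}K(z_{\sigma(1)},z_{\sigma(2)})\overline{K(z_{\sigma(1)},z_{\sigma(3)})}$, where $S_3$ is the permutation group on three elements. The Menger curvature $c(\mathbf z)$ is $0$ if $z_1,z_2,z_3$ are collinear and otherwise the reciprocal of the radius of the circle through $z_1,z_2,z_3$. *)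

theory Defs
  imports "HOL-Analysis.Analysis"
begin

definition C3_on :: "real set \<Rightarrow> (real \<Rightarrow> real) \<Rightarrow> bool" where
  "C3_on J A \<longleftrightarrow>
     (\<forall>x\<in>J. A differentiable (at x) \<and> deriv A differentiable (at x)
              \<and> deriv (deriv A) differentiable (at x))
     \<and> continuous_on J (deriv (deriv (deriv A)))"

definition gpt :: "(real \<Rightarrow> real) \<Rightarrow> real \<Rightarrow> complex" where
  "gpt A x = Complex x (A x)"

definition sfun :: "(real \<Rightarrow> real) \<Rightarrow> real \<Rightarrow> real" where
  "sfun A x = sqrt (1 + (deriv A x)^2)"

text \<open>Kernel K_Gamma (normalising factor 1/(2 pi) omitted), for w = x + iA(x), z = y + iA(y).\<close>
definition KGamma :: "(real \<Rightarrow> real) \<Rightarrow> complex \<Rightarrow> complex \<Rightarrow> complex" where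
  "KGamma A w z =
     (let x = Re w; y = Re z in
      (complex_of_real (deriv A x) - \<i>) /
      (complex_of_real (sfun A x) * Complex (x - y) (A x - A y)))"

text \<open>S[K](z1,z2,z3) = sum over sigma in S_3 of K(z_s1,z_s2) * conj K(z_s1,z_s3), written out.\<close>
definition Sop :: "(complex \<Rightarrow> complex \<Rightarrow> complex) \<Rightarrow> complex \<Rightarrow> complex \<Rightarrow> complex \<Rightarrow> complex" where
  "Sop K z1 z2 z3 =
      K z1 z2 * cnj (K z1 z3) + K z1 z3 * cnj (K z1 z2)
    + K z2 z1 * cnj (K z2 z3) + K z2 z3 * cnj (K z2 z1)
    + K z3 z1 * cnj (K z3 z2) + K z3 z2 * cnj (K z3 z1)"

definition menger :: "complex \<Rightarrow> complex \<Rightarrow> complex \<Rightarrow> real" where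
  "menger z1 z2 z3 =
     (if collinear {z1, z2, z3} then 0
      else 1 / (THE r. \<exists>c. dist z1 c = r \<and> dist z2 c = r \<and> dist z3 c = r))"

end

theory Submission imports Defs begin

lemma circ_ident:
  fixes w1 w2 p1 p2 q1 q2 :: real
  assumes "2*(w1*p1+w2*p2) = p1^2+p2^2" "2*(w1*q1+w2*q2) = q1^2+q2^2"
  shows "4*(w1^2+w2^2)*(p1*q2-p2*q1)^2 = (p1^2+p2^2)*(q1^2+q2^2)*((q1-p1)^2+(q2-p2)^2)"
proof -
  have a: "2*w1*(p1*q2-p2*q1) = (p1^2+p2^2)*q2 - (q1^2+q2^2)*p2" using assms by algebra
  have b: "2*w2*(p1*q2-p2*q1) = (q1^2+q2^2)*p1 - (p1^2+p2^2)*q1" using assms by algebra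
  have "4*(w1^2+w2^2)*(p1*q2-p2*q1)^2 = (2*w1*(p1*q2-p2*q1))^2 + (2*w2*(p1*q2-p2*q1))^2"
    by algebra
  also have "\<dots> = (p1^2+p2^2)*(q1^2+q2^2)*((q1-p1)^2+(q2-p2)^2)" unfolding a b by algebra
  finally show ?thesis .
qed

lemma not_collinear3:
  fixes z1 z2 z3 :: complex
  assumes "Re (z2-z1) * Im (z3-z1) - Im (z2-z1) * Re (z3-z1) \<noteq> 0"
  shows "\<not> collinear {z1,z2,z3}"
proof
  assume "collinear {z1,z2,z3}"
  then obtain u where u: "\<forall>x\<in>{z1,z2,z3}. \<forall>y\<in>{z1,z2,z3}. \<exists>c. x - y = c *\<^sub>R u"
    unfolding collinear_def by blast
  then obtain c1 c2 where "z2 - z1 = c1 *\<^sub>R u" "z3 - z1 = c2 *\<^sub>R u" by blast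
  then show False using assms by (simp add: algebra_simps)
qed

lemma menger_formula:
  fixes z1 z2 z3 :: complex
  defines "cr \<equiv> Re (z2-z1) * Im (z3-z1) - Im (z2-z1) * Re (z3-z1)"
  assumes cr: "cr \<noteq> 0"
  shows "(menger z1 z2 z3)^2 = 4*cr^2 / ((cmod (z2-z1))^2 * (cmod (z3-z1))^2 * (cmod (z3-z2))^2)"
proof -
  define p1 where "p1 = Re (z2-z1)"
  define p2 where "p2 = Im (z2-z1)"
  define q1 where "q1 = Re (z3-z1)"
  define q2 where "q2 = Im (z3-z1)"
  define P where "P = p1^2+p2^2"
  define Q where "Q = q1^2+q2^2"
  define D where "D = (q1-p1)^2+(q2-p2)^2"
  have crp: "cr = p1*q2-p2*q1" unfolding cr_def p1_def p2_def q1_def q2_def by simp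
  have nP: "(cmod (z2-z1))^2 = P" unfolding P_def p1_def p2_def cmod_power2 by simp
  have nQ: "(cmod (z3-z1))^2 = Q" unfolding Q_def q1_def q2_def cmod_power2 by simp
  have nD: "(cmod (z3-z2))^2 = D" unfolding D_def p1_def p2_def q1_def q2_def cmod_power2 by (simp add: algebra_simps)
  have PQD: "P \<ge> 0" "Q \<ge> 0" "D \<ge> 0" unfolding P_def Q_def D_def by auto
  define r0 where "r0 = sqrt (P*Q*D) / (2*\<bar>cr\<bar>)"
  have key: "r = r0" if "r \<ge> 0" "4*r^2*cr^2 = P*Q*D" for r
  proof -
    have "(2*\<bar>cr\<bar>*r)^2 = P*Q*D" using that(2) by (simp add: power_mult_distrib power2_abs mult.commute mult.left_commute)
    hence "2*\<bar>cr\<bar>*r = sqrt (P*Q*D)" using that(1) by (metis abs_ge_zero mult_nonneg_nonneg real_sqrt_abs real_sqrt_unique zero_le_numeral abs_of_nonneg)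
    thus ?thesis unfolding r0_def using cr by (simp add: field_simps)
  qed
  have uniq: "r = r0" if "dist z1 c = r" "dist z2 c = r" "dist z3 c = r" for r c
  proof -
    define w1 where "w1 = Re (c - z1)"
    define w2 where "w2 = Im (c - z1)"
    have dd: "(dist z c)^2 = (Re z - Re z1 - w1)^2 + (Im z - Im z1 - w2)^2" for z
      unfolding w1_def w2_def dist_norm cmod_power2 by simp
    have d1: "r^2 = w1^2+w2^2" using dd[of z1] that(1) by simp
    have d2: "r^2 = (p1-w1)^2+(p2-w2)^2" using dd[of z2] that(2) by (simp add: p1_def p2_def)
    have d3: "r^2 = (q1-w1)^2+(q2-w2)^2" using dd[of z3] that(3) by (simp add: q1_def q2_def)
    have e1: "2*(w1*p1+w2*p2) = p1^2+p2^2" using d1 d2 by algebra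
    have e2: "2*(w1*q1+w2*q2) = q1^2+q2^2" using d1 d3 by algebra
    have "4*r^2*cr^2 = P*Q*D" using circ_ident[OF e1 e2] d1 unfolding crp P_def Q_def D_def by simp
    moreover have "r \<ge> 0" using that(1) by auto
    ultimately show ?thesis using key by blast
  qed
  define w1 where "w1 = (P*q2 - Q*p2)/(2*cr)"
  define w2 where "w2 = (Q*p1 - P*q1)/(2*cr)"
  have w1c: "w1*(2*cr) = P*q2 - Q*p2" using cr by (simp add: w1_def)
  have w2c: "w2*(2*cr) = Q*p1 - P*q1" using cr by (simp add: w2_def)
  have "2*(w1*p1+w2*p2)*(2*cr) = (p1^2+p2^2)*(2*cr)"
    using w1c w2c unfolding crp P_def Q_def by algebra
  hence e1: "2*(w1*p1+w2*p2) = p1^2+p2^2" using cr by simp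
  have "2*(w1*q1+w2*q2)*(2*cr) = (q1^2+q2^2)*(2*cr)"
    using w1c w2c unfolding crp P_def Q_def by algebra
  hence e2: "2*(w1*q1+w2*q2) = q1^2+q2^2" using cr by simp
  have ww: "4*(w1^2+w2^2)*cr^2 = P*Q*D" using circ_ident[OF e1 e2] unfolding crp P_def Q_def D_def by simp
  have wr: "w1^2+w2^2 = r0^2"
  proof -
    have "r0^2 = P*Q*D/(4*cr^2)" unfolding r0_def using PQD
      by (simp add: power_divide power_mult_distrib power2_abs)
    hence "4*cr^2*r0^2 = 4*cr^2*(w1^2+w2^2)" using ww cr by (simp add: field_simps)
    thus ?thesis using cr by simp
  qed
  have r0pos: "r0 \<ge> 0" unfolding r0_def using PQD by (intro divide_nonneg_nonneg) auto
  define c where "c = z1 + Complex w1 w2"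
  have dd: "(dist z c)^2 = (Re z - Re z1 - w1)^2 + (Im z - Im z1 - w2)^2" for z
    unfolding c_def dist_norm cmod_power2 by (simp add: algebra_simps)
  have sq: "dist z c = r0" if "(dist z c)^2 = r0^2" for z
    using that r0pos by (metis zero_le_dist power2_eq_iff_nonneg)
  have "dist z1 c = r0" using dd[of z1] wr by (intro sq) simp
  moreover have "dist z2 c = r0" using dd[of z2] wr e1 unfolding p1_def p2_def
    by (intro sq) (simp, algebra)
  moreover have "dist z3 c = r0" using dd[of z3] wr e2 unfolding q1_def q2_def
    by (intro sq) (simp, algebra)
  ultimately have ex: "\<exists>c. dist z1 c = r0 \<and> dist z2 c = r0 \<and> dist z3 c = r0" by blast
  have the: "(THE r. \<exists>c. dist z1 c = r \<and> dist z2 c = r \<and> dist z3 c = r) = r0"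
    using ex uniq by (intro the_equality) blast+
  have "menger z1 z2 z3 = 1/r0" unfolding menger_def using not_collinear3[OF cr[unfolded cr_def]] the by simp
  hence "(menger z1 z2 z3)^2 = 1/r0^2" by (simp add: power_divide)
  also have "\<dots> = 4*cr^2/(P*Q*D)" using wr ww cr by (cases "r0 = 0") (auto simp: field_simps)
  finally show ?thesis using nP nQ nD by simp
qed
lemma pair_abs:
  fixes a s u v uu vv N NN :: real
  assumes "s^2 = 1 + a^2" "s > 0" "N \<noteq> 0" "NN \<noteq> 0"
  shows "((a*u - v)/(s*N)) * ((a*uu - vv)/(s*NN)) + (-(u+a* v)/(s*N)) * (-(uu+a* vv)/(s*NN))
    = (u*uu+v * vv)/(N*NN)"
proof -
  have "((a*u - v)/(s*N)) * ((a*uu - vv)/(s*NN)) + (-(u+a* v)/(s*N)) * (-(uu+a* vv)/(s*NN))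
     = ((a*u - v)*(a*uu - vv) + (u+a* v)*(uu+a* vv))/(s^2*(N*NN))"
    apply (simp add: power2_eq_square add_divide_distrib mult_ac)
    by (simp add: algebra_simps)
  also have "(a*u - v)*(a*uu - vv) + (u+a* v)*(uu+a* vv) = s^2*(u*uu+v * vv)"
    unfolding assms(1) by algebra
  finally show ?thesis using assms(2) by simp
qed

lemma c2_abs:
  fixes u v w K L1 L2 L3 :: real
  assumes "u \<noteq> 0" "v \<noteq> 0" "w \<noteq> 0"
  shows "4*(u* v *w*K)^2/((u^2*L1)*(v^2*L2)*(w^2*L3)) = 4*K^2/(L1*L2*L3)"
  using assms by (simp add: power_mult_distrib)

lemma rk_abs:
  fixes x y Ax Ay d h :: real
  assumes "Ay = Ax + d*(y-x) + h*(y-x)^2"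
  shows "(x-y)^2+(Ax-Ay)^2 = (x-y)^2*(1 + (d + h*(y-x))^2)"
    "d*(x-y) - (Ax-Ay) = (x-y)^2*h"
  unfolding assms by algebra+

lemma slope_taylor:
  fixes x y Ax Ay d B :: real
  assumes "Ay = Ax + d*(y-x) + B/2*(y-x)^2" "x \<noteq> y"
  shows "(Ay - Ax)/(y-x) = d + B/2*(y-x)"
proof -
  have "Ay - Ax = (y-x)*(d + B/2*(y-x))" unfolding assms(1) by (simp add: power2_eq_square field_simps)
  thus ?thesis using assms(2) by simp
qed
lemma frac3:
  fixes P Q D a b c :: real
  assumes "P \<noteq> 0" "Q \<noteq> 0" "D \<noteq> 0"
  shows "2*(a/(P*Q) + b/(P*D) + c/(Q*D)) = 2*(a*D+b*Q+c*P)/(P*Q*D)"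
  using assms by (simp add: field_simps)

lemma lagrange_sum:
  fixes x1 x2 x3 y1 y2 y3 :: real
  assumes "x1 \<noteq> x2" "x1 \<noteq> x3" "x2 \<noteq> x3"
  shows "2*(((x1-x2)*(x1-x3) + (y1-y2)*(y1-y3))/(((x1-x2)^2+(y1-y2)^2)*((x1-x3)^2+(y1-y3)^2))
          + ((x2-x1)*(x2-x3) + (y2-y1)*(y2-y3))/(((x2-x1)^2+(y2-y1)^2)*((x2-x3)^2+(y2-y3)^2))
          + ((x3-x1)*(x3-x2) + (y3-y1)*(y3-y2))/(((x3-x1)^2+(y3-y1)^2)*((x3-x2)^2+(y3-y2)^2)))
    = 4*((x2-x1)*(y3-y1) - (y2-y1)*(x3-x1))^2 /
      (((x2-x1)^2+(y2-y1)^2)*((x3-x1)^2+(y3-y1)^2)*((x3-x2)^2+(y3-y2)^2))"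
proof -
  define P where "P = (x2-x1)^2+(y2-y1)^2"
  define Q where "Q = (x3-x1)^2+(y3-y1)^2"
  define D where "D = (x3-x2)^2+(y3-y2)^2"
  have P: "P \<noteq> 0" using assms unfolding P_def by (simp add: add_nonneg_eq_0_iff)
  have Q: "Q \<noteq> 0" using assms unfolding Q_def by (simp add: add_nonneg_eq_0_iff)
  have D: "D \<noteq> 0" using assms unfolding D_def by (simp add: add_nonneg_eq_0_iff)
  have e1: "(x1-x2)^2+(y1-y2)^2 = P" "(x1-x3)^2+(y1-y3)^2 = Q" "(x2-x1)^2+(y2-y1)^2 = P"
     "(x2-x3)^2+(y2-y3)^2 = D" "(x3-x1)^2+(y3-y1)^2 = Q" "(x3-x2)^2+(y3-y2)^2 = D"
    unfolding P_def Q_def D_def by (simp_all add: power2_commute)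
  have num: "2*(((x1-x2)*(x1-x3) + (y1-y2)*(y1-y3))*D + ((x2-x1)*(x2-x3) + (y2-y1)*(y2-y3))*Q
     + ((x3-x1)*(x3-x2) + (y3-y1)*(y3-y2))*P) = 4*((x2-x1)*(y3-y1) - (y2-y1)*(x3-x1))^2"
    unfolding P_def Q_def D_def by algebra
  show ?thesis unfolding e1 frac3[OF P Q D] num ..
qed
lemma rolle_real:
  fixes f f' :: "real \<Rightarrow> real"
  assumes "a < b" "f a = f b" "\<And>x. a \<le> x \<Longrightarrow> x \<le> b \<Longrightarrow> (f has_real_derivative f' x) (at x)"
  shows "\<exists>z. a < z \<and> z < b \<and> f' z = 0"
proof -
  have "continuous_on {a..b} f"
  proof (intro continuous_at_imp_continuous_on ballI)
    fix x assume "x \<in> {a..b}" thus "isCont f x" using assms(3) DERIV_isCont by auto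
  qed
  moreover have der: "\<And>x. a < x \<Longrightarrow> x < b \<Longrightarrow> (f has_derivative (\<lambda>v. f' x * v)) (at x)"
  proof -
    fix x assume "a < x" "x < b"
    hence "(f has_real_derivative f' x) (at x)" using assms(3) by auto
    thus "(f has_derivative (\<lambda>v. f' x * v)) (at x)" by (simp add: has_field_derivative_def)
  qed
  ultimately have "\<exists>z. a < z \<and> z < b \<and> (\<lambda>v. f' z * v) = (\<lambda>v. 0)"
    by (rule Rolle_deriv[OF assms(1,2), where f'="\<lambda>x v. f' x * v"])
  then obtain z where z: "a < z" "z < b" "(\<lambda>v. f' z * v) = (\<lambda>v. 0)" by blast
  have "f' z * 1 = 0" using fun_cong[OF z(3), of 1] by simp
  hence "f' z = 0" by simp
  with z(1,2) show ?thesis by blast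
qed

lemma tend_sq:
  fixes \<xi> e :: "nat \<Rightarrow> real"
  assumes "e \<longlonglongrightarrow> 0" "\<And>n. \<bar>\<xi> n - x0\<bar> \<le> e n"
  shows "\<xi> \<longlonglongrightarrow> x0"
proof -
  have "(\<lambda>n. \<xi> n - x0) \<longlonglongrightarrow> 0"
    using assms by (intro Lim_null_comparison[OF _ assms(1)]) (simp add: always_eventually)
  thus ?thesis by (rule LIM_zero_cancel)
qed

lemma tend_abs0:
  fixes X :: "nat \<Rightarrow> real"
  assumes "X \<longlonglongrightarrow> x0"
  shows "(\<lambda>n. \<bar>X n - x0\<bar>) \<longlonglongrightarrow> 0"
proof -
  have "(\<lambda>n. \<bar>X n - x0\<bar>) \<longlonglongrightarrow> \<bar>x0 - x0\<bar>" by (intro tendsto_intros assms)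
  thus ?thesis by simp
qed


definition rr :: "real \<Rightarrow> real \<Rightarrow> real \<Rightarrow> real \<Rightarrow> real \<Rightarrow> real \<Rightarrow> real" where
  "rr a s x y X Y = (a*(x-X) - (y-Y))/(s*((x-X)^2+(y-Y)^2))"
definition ii :: "real \<Rightarrow> real \<Rightarrow> real \<Rightarrow> real \<Rightarrow> real \<Rightarrow> real \<Rightarrow> real" where
  "ii a s x y X Y = - ((x-X) + a * (y-Y))/(s*((x-X)^2+(y-Y)^2))"

lemma pair_id:
  assumes "s^2 = 1 + a^2" "s > 0" "x \<noteq> X" "x \<noteq> X2"
  shows "rr a s x y X Y * rr a s x y X2 Y2 + ii a s x y X Y * ii a s x y X2 Y2
    = ((x-X)*(x-X2) + (y-Y)*(y-Y2))/(((x-X)^2+(y-Y)^2)*((x-X2)^2+(y-Y2)^2))"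
proof -
  have n1: "(x-X)^2+(y-Y)^2 \<noteq> 0" using assms(3) by (simp add: add_nonneg_eq_0_iff)
  have n2: "(x-X2)^2+(y-Y2)^2 \<noteq> 0" using assms(4) by (simp add: add_nonneg_eq_0_iff)
  show ?thesis unfolding rr_def ii_def
    by (rule pair_abs[OF assms(1,2) n1 n2])
qed

definition RK :: "(real \<Rightarrow> real) \<Rightarrow> real \<Rightarrow> real \<Rightarrow> real" where
  "RK A x y = rr (deriv A x) (sfun A x) x (A x) y (A y)"
definition IK :: "(real \<Rightarrow> real) \<Rightarrow> real \<Rightarrow> real \<Rightarrow> real" where
  "IK A x y = ii (deriv A x) (sfun A x) x (A x) y (A y)"

lemma onesq_ne: "1 + (t::real)^2 \<noteq> 0"
proof -
  have "0 < 1 + t^2" by (simp add: add_pos_nonneg)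
  thus ?thesis by simp
qed

lemma sfun_pos: "sfun A x > 0"
  unfolding sfun_def by (simp add: add_pos_nonneg)

lemma sfun_sq: "(sfun A x)^2 = 1 + (deriv A x)^2"
  unfolding sfun_def by (simp add: add_nonneg_nonneg)

lemma rk_taylor2:
  fixes x y Ax Ay d s h :: real
  assumes "Ay = Ax + d*(y-x) + h*(y-x)^2" "x \<noteq> y"
  shows "rr d s x Ax y Ay = h / (s*(1 + (d + h*(y-x))^2))"
proof -
  have "rr d s x Ax y Ay = ((x-y)^2*h) / (s*((x-y)^2*(1 + (d + h*(y-x))^2)))"
    unfolding rr_def rk_abs[OF assms(1)] ..
  also have "\<dots> = h / (s*(1 + (d + h*(y-x))^2))" using assms(2) by simp
  finally show ?thesis .
qed


lemma KRe: "Re (KGamma A (gpt A x) (gpt A y)) = RK A x y"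
proof -
  have s: "sfun A x > 0" by (rule sfun_pos)
  define u where "u = x - y"
  define v where "v = A x - A y"
  have "Re (KGamma A (gpt A x) (gpt A y)) =
    (deriv A x * (sfun A x * u) + (-1) * (sfun A x * v)) / ((sfun A x * u)^2 + (sfun A x * v)^2)"
    unfolding KGamma_def gpt_def Let_def u_def v_def by (simp add: Re_divide)
  also have "\<dots> = (sfun A x * (deriv A x * u - v)) / (sfun A x * (sfun A x * (u^2 + v^2)))"
  proof -
    have "(sfun A x * u)^2 + (sfun A x * v)^2 = sfun A x * (sfun A x * (u^2 + v^2))"
      by (simp add: power2_eq_square algebra_simps)
    moreover have "deriv A x * (sfun A x * u) + (-1) * (sfun A x * v) = sfun A x * (deriv A x * u - v)"
      by (simp add: algebra_simps)
    ultimately show ?thesis by simp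
  qed
  also have "\<dots> = (deriv A x * u - v) / (sfun A x * (u^2 + v^2))"
    using s by simp
  finally show ?thesis unfolding RK_def rr_def u_def v_def .
qed

lemma KIm: "Im (KGamma A (gpt A x) (gpt A y)) = IK A x y"
proof -
  have s: "sfun A x > 0" by (rule sfun_pos)
  define u where "u = x - y"
  define v where "v = A x - A y"
  have "Im (KGamma A (gpt A x) (gpt A y)) =
    ((-1) * (sfun A x * u) - deriv A x * (sfun A x * v)) / ((sfun A x * u)^2 + (sfun A x * v)^2)"
    unfolding KGamma_def gpt_def Let_def u_def v_def by (simp add: Im_divide)
  also have "\<dots> = (sfun A x * (- (u + deriv A x * v))) / (sfun A x * (sfun A x * (u^2 + v^2)))"
  proof -
    have "(sfun A x * u)^2 + (sfun A x * v)^2 = sfun A x * (sfun A x * (u^2 + v^2))"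
      by (simp add: power2_eq_square algebra_simps)
    moreover have "(-1) * (sfun A x * u) - deriv A x * (sfun A x * v) = sfun A x * (- (u + deriv A x * v))"
      by (simp add: algebra_simps)
    ultimately show ?thesis by simp
  qed
  also have "\<dots> = (- (u + deriv A x * v)) / (sfun A x * (u^2 + v^2))"
    using s by simp
  finally show ?thesis unfolding IK_def ii_def u_def v_def by simp
qed

lemma Sop_real:
  "Sop (\<lambda>w z. complex_of_real (f w z)) z1 z2 z3 =
   complex_of_real (2*(f z1 z2 * f z1 z3 + f z2 z1 * f z2 z3 + f z3 z1 * f z3 z2))"
  unfolding Sop_def by (simp add: algebra_simps)

lemma c2_alg:
  fixes x1 x2 x3 y1 y2 y3 K :: real
  assumes "x1 \<noteq> x2" "x1 \<noteq> x3" "x2 \<noteq> x3"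
    and "(x2-x1)*(y3-y1) - (y2-y1)*(x3-x1) = (x2-x1)*(x3-x1)*(x3-x2)*K"
  shows "4*((x2-x1)*(y3-y1) - (y2-y1)*(x3-x1))^2 /
      (((x2-x1)^2+(y2-y1)^2)*((x3-x1)^2+(y3-y1)^2)*((x3-x2)^2+(y3-y2)^2))
   = 4*K^2/((1+((y2-y1)/(x2-x1))^2)*(1+((y3-y1)/(x3-x1))^2)*(1+((y3-y2)/(x3-x2))^2))"
proof -
  have f: "(b-a)^2+(d-c)^2 = (b-a)^2*(1+((d-c)/(b-a))^2)" if "a \<noteq> b" for a b c d :: real
    using that by (simp add: field_simps)
  have n: "x2-x1 \<noteq> 0" "x3-x1 \<noteq> 0" "x3-x2 \<noteq> 0" using assms(1-3) by auto
  show ?thesis unfolding assms(4) f[OF assms(1)] f[OF assms(2)] f[OF assms(3)]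
    by (rule c2_abs[OF n])
qed

locale cset =
  fixes A :: "real \<Rightarrow> real" and J :: "real set" and x0 d0 :: real
  assumes C3: "C3_on J A" and d0: "d0 > 0"
    and ball: "\<And>t. \<bar>t - x0\<bar> < d0 \<Longrightarrow> t \<in> J"
    and nz: "\<And>t. \<bar>t - x0\<bar> < d0 \<Longrightarrow> deriv (deriv A) t \<noteq> 0"
begin

lemma dA: "\<bar>t - x0\<bar> < d0 \<Longrightarrow> (A has_real_derivative deriv A t) (at t)"
  using C3 ball unfolding C3_on_def by (simp add: DERIV_deriv_iff_real_differentiable)

lemma dA1: "\<bar>t - x0\<bar> < d0 \<Longrightarrow> (deriv A has_real_derivative deriv (deriv A) t) (at t)"
  using C3 ball unfolding C3_on_def by (simp add: DERIV_deriv_iff_real_differentiable)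

lemma x0in: "\<bar>x0 - x0\<bar> < d0" using d0 by simp

lemma cont1: "isCont (deriv A) x0"
  using dA1[OF x0in] by (rule DERIV_isCont)

lemma cont2: "isCont (deriv (deriv A)) x0"
proof -
  have "deriv (deriv A) differentiable (at x0)" using C3 ball[OF x0in] unfolding C3_on_def by blast
  thus ?thesis by (simp add: differentiable_imp_continuous_within)
qed

lemma btw: "a \<le> t \<Longrightarrow> t \<le> c \<Longrightarrow> \<bar>t - x0\<bar> \<le> max \<bar>a - x0\<bar> \<bar>c - x0\<bar>"
  by (auto simp: abs_le_iff max_def)

lemma taylor_pt:
  assumes "\<bar>x - x0\<bar> < d0" "\<bar>y - x0\<bar> < d0" "x \<noteq> y"
  shows "\<exists>\<xi>. \<bar>\<xi> - x0\<bar> \<le> max \<bar>x - x0\<bar> \<bar>y - x0\<bar> \<and>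
     A y = A x + deriv A x * (y - x) + deriv (deriv A) \<xi> / 2 * (y - x)^2"
proof -
  define diff where "diff = (\<lambda>m::nat. if m = 0 then A else if m = 1 then deriv A else deriv (deriv A))"
  have inb: "\<bar>t - x0\<bar> < d0" if "min x y \<le> t" "t \<le> max x y" for t
    using btw[of "min x y" t "max x y"] that assms(1,2) by (auto simp: min_def max_def split: if_splits)
  have D: "\<forall>(m::nat) t. m < 2 \<and> min x y \<le> t \<and> t \<le> max x y \<longrightarrow> DERIV (diff m) t :> diff (Suc m) t"
  proof (intro allI impI)
    fix m :: nat and t :: real assume h: "m < 2 \<and> min x y \<le> t \<and> t \<le> max x y"
    hence "m = 0 \<or> m = 1" by auto
    thus "DERIV (diff m) t :> diff (Suc m) t" using dA[OF inb] dA1[OF inb] h unfolding diff_def by auto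
  qed
  obtain t where t: "(if y < x then y < t \<and> t < x else x < t \<and> t < y)"
    "A y = (\<Sum>m<2. diff m x / fact m * (y - x)^m) + diff 2 t / fact 2 * (y - x)^2"
  proof -
    have d0': "diff 0 = A" by (simp add: diff_def)
    have "\<exists>t. (if y < x then y < t \<and> t < x else x < t \<and> t < y) \<and>
      A y = (\<Sum>m<2. diff m x / fact m * (y - x)^m) + diff 2 t / fact 2 * (y - x)^2"
      by (rule Taylor[OF _ d0' D]) (use assms(3) in auto)
    thus ?thesis using that by blast
  qed
  have "\<bar>t - x0\<bar> \<le> max \<bar>x - x0\<bar> \<bar>y - x0\<bar>"
    using t(1) btw[of x t y] btw[of y t x] by (auto split: if_splits simp: max.commute)
  moreover have "A y = A x + deriv A x * (y - x) + deriv (deriv A) t / 2 * (y - x)^2"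
    using t(2) unfolding diff_def by (simp add: numeral_2_eq_2)
  ultimately show ?thesis by blast
qed


lemma cross_sorted:
  assumes "a < b" "b < c" "\<bar>a - x0\<bar> < d0" "\<bar>c - x0\<bar> < d0"
  shows "\<exists>\<xi>. a < \<xi> \<and> \<xi> < c \<and>
    (b-a)*(A c - A a) - (c-a)*(A b - A a) = (b-a)*(c-a)*(c-b) * (deriv (deriv A) \<xi> / 2)"
proof -
  have inb: "\<bar>t - x0\<bar> < d0" if "a \<le> t" "t \<le> c" for t using btw[OF that] assms(3,4) by simp
  define m where "m = (A b - A a)/(b-a)"
  define Q where "Q = ((b-a)*(A c - A a) - (c-a)*(A b - A a)) / ((b-a)*(c-a)*(c-b))"
  define g where "g = (\<lambda>t. A t - A a - m*(t-a) - Q*((t-a)*(t-b)))"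
  define g1 where "g1 = (\<lambda>t. deriv A t - m - Q*(2*t - a - b))"
  have dg: "(g has_real_derivative g1 t) (at t)" if "a \<le> t" "t \<le> c" for t
    unfolding g_def g1_def
    by (rule derivative_eq_intros dA[OF inb[OF that]] refl)+ (simp add: algebra_simps)
  have dg1: "(g1 has_real_derivative (deriv (deriv A) t - Q*2)) (at t)" if "a \<le> t" "t \<le> c" for t
    unfolding g1_def
    by (rule derivative_eq_intros dA1[OF inb[OF that]] refl)+ (simp add: algebra_simps)
  have ga: "g a = 0" by (simp add: g_def)
  have gb: "g b = 0" using assms by (simp add: g_def m_def)
  have gc: "g c = 0"
  proof -
    have "Q*((c-a)*(c-b)) = ((b-a)*(A c - A a) - (c-a)*(A b - A a))/(b-a)"
    proof -
      have gen: "NN/(X*Y)*Y = NN/X" if "Y \<noteq> 0" for NN X Y :: real using that by simp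
      have "(c-a)*(c-b) \<noteq> 0" using assms(1,2) by simp
      from gen[OF this, of "(b-a)*(A c - A a) - (c-a)*(A b - A a)" "b-a"]
      show ?thesis unfolding Q_def by (simp add: mult.assoc)
    qed
    moreover have "m*(c-a) = (c-a)*(A b - A a)/(b-a)" unfolding m_def by simp
    ultimately have "m*(c-a) + Q*((c-a)*(c-b)) = ((b-a)*(A c - A a))/(b-a)"
      by (simp add: diff_divide_distrib add_divide_distrib)
    also have "\<dots> = A c - A a" using assms(1) by simp
    finally show ?thesis unfolding g_def by linarith
  qed
  obtain \<xi>1 where x1: "a < \<xi>1" "\<xi>1 < b" "g1 \<xi>1 = 0"
    using rolle_real[of a b g g1] assms(1,2) ga gb dg by fastforce
  obtain \<xi>2 where x2: "b < \<xi>2" "\<xi>2 < c" "g1 \<xi>2 = 0"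
    using rolle_real[of b c g g1] assms(1,2) gb gc dg by fastforce
  have "\<xi>1 < \<xi>2" using x1 x2 by linarith
  then obtain \<xi> where x: "\<xi>1 < \<xi>" "\<xi> < \<xi>2" "deriv (deriv A) \<xi> - Q*2 = 0"
    using rolle_real[of \<xi>1 \<xi>2 g1 "\<lambda>t. deriv (deriv A) t - Q*2"] x1 x2 dg1 by fastforce
  have "(b-a)*(A c - A a) - (c-a)*(A b - A a) = (b-a)*(c-a)*(c-b) * Q"
    unfolding Q_def using assms(1,2) by simp
  also have "Q = deriv (deriv A) \<xi> / 2" using x(3) by simp
  finally show ?thesis using x x1 x2 by (intro exI[of _ \<xi>]) auto
qed

lemma cross_pt:
  assumes "\<bar>x1-x0\<bar> < d0" "\<bar>x2-x0\<bar> < d0" "\<bar>x3-x0\<bar> < d0" "x1 \<noteq> x2" "x1 \<noteq> x3" "x2 \<noteq> x3"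
  shows "\<exists>\<xi>. \<bar>\<xi>-x0\<bar> \<le> max \<bar>x1-x0\<bar> (max \<bar>x2-x0\<bar> \<bar>x3-x0\<bar>) \<and>
     (x2-x1)*(A x3 - A x1) - (x3-x1)*(A x2 - A x1) = (x2-x1)*(x3-x1)*(x3-x2) * (deriv (deriv A) \<xi> / 2)"
proof -
  define M where "M = max \<bar>x1-x0\<bar> (max \<bar>x2-x0\<bar> \<bar>x3-x0\<bar>)"
  define P where "P = (\<lambda>a b c K::real. (b-a)*(A c - A a) - (c-a)*(A b - A a) = (b-a)*(c-a)*(c-b)*K)"
  have sw12: "P b a c K" if "P a b c K" for a b c K using that unfolding P_def by algebra
  have sw23: "P a c b K" if "P a b c K" for a b c K using that unfolding P_def by algebra
  have H: "\<exists>\<xi>. \<bar>\<xi> - x0\<bar> \<le> M \<and> P a b c (deriv (deriv A) \<xi> / 2)"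
    if h: "a < b" "b < c" "a \<in> {x1,x2,x3}" "c \<in> {x1,x2,x3}" for a b c
  proof -
    have aM: "\<bar>a - x0\<bar> \<le> M" "\<bar>a - x0\<bar> < d0" using h(3) assms(1-3) unfolding M_def by (auto simp: le_max_iff_disj)
    have cM: "\<bar>c - x0\<bar> \<le> M" "\<bar>c - x0\<bar> < d0" using h(4) assms(1-3) unfolding M_def by (auto simp: le_max_iff_disj)
    obtain \<xi> where x: "a < \<xi>" "\<xi> < c" "P a b c (deriv (deriv A) \<xi> / 2)"
      using cross_sorted[OF h(1,2) aM(2) cM(2)] unfolding P_def by blast
    have "\<bar>\<xi> - x0\<bar> \<le> M" using btw[of a \<xi> c] x(1,2) aM(1) cM(1) by simp
    thus ?thesis using x(3) by blast
  qed
  have "\<exists>\<xi>. \<bar>\<xi> - x0\<bar> \<le> M \<and> P x1 x2 x3 (deriv (deriv A) \<xi> / 2)"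
  proof -
    have o: "x1<x2 \<or> x2<x1" "x1<x3 \<or> x3<x1" "x2<x3 \<or> x3<x2" using assms(4-6) by auto
    show ?thesis
    proof (cases "x1 < x2")
      case T12: True
      show ?thesis
      proof (cases "x2 < x3")
        case True thus ?thesis using H[of x1 x2 x3] T12 by auto
      next
        case F23: False
        show ?thesis
        proof (cases "x1 < x3")
          case True thus ?thesis using H[of x1 x3 x2] T12 F23 o sw23 by blast
        next
          case False thus ?thesis using H[of x3 x1 x2] T12 F23 o sw12 sw23 by blast
        qed
      qed
    next
      case F12: False
      show ?thesis
      proof (cases "x1 < x3")
        case True thus ?thesis using H[of x2 x1 x3] F12 o sw12 by blast
      next
        case F13: False
        show ?thesis
        proof (cases "x2 < x3")
          case True thus ?thesis using H[of x2 x3 x1] F12 F13 o sw12 sw23 by blast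
        next
          case False thus ?thesis using H[of x3 x2 x1] F12 F13 o sw12 sw23 by blast
        qed
      qed
    qed
  qed
  thus ?thesis unfolding P_def M_def by blast
qed

lemma taylor_seq:
  assumes "X \<longlonglongrightarrow> x0" "Y \<longlonglongrightarrow> x0" "\<forall>n. \<bar>X n - x0\<bar> < d0" "\<forall>n. \<bar>Y n - x0\<bar> < d0"
    "\<forall>n. X n \<noteq> Y n"
  shows "\<exists>\<xi>. \<xi> \<longlonglongrightarrow> x0 \<and> (\<forall>n. A (Y n) = A (X n) + deriv A (X n) * (Y n - X n)
            + deriv (deriv A) (\<xi> n) / 2 * (Y n - X n)^2)"
proof -
  have "\<forall>n. \<exists>\<xi>. \<bar>\<xi> - x0\<bar> \<le> max \<bar>X n - x0\<bar> \<bar>Y n - x0\<bar> \<and>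
     A (Y n) = A (X n) + deriv A (X n) * (Y n - X n) + deriv (deriv A) \<xi> / 2 * (Y n - X n)^2"
  proof (rule allI)
    fix n show "\<exists>\<xi>. \<bar>\<xi> - x0\<bar> \<le> max \<bar>X n - x0\<bar> \<bar>Y n - x0\<bar> \<and>
     A (Y n) = A (X n) + deriv A (X n) * (Y n - X n) + deriv (deriv A) \<xi> / 2 * (Y n - X n)^2"
      by (rule taylor_pt) (use assms(3-5) in auto)
  qed
  from choice[OF this] obtain \<xi> where \<xi>: "\<forall>n. \<bar>\<xi> n - x0\<bar> \<le> max \<bar>X n - x0\<bar> \<bar>Y n - x0\<bar> \<and>
     A (Y n) = A (X n) + deriv A (X n) * (Y n - X n) + deriv (deriv A) (\<xi> n) / 2 * (Y n - X n)^2"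
    by blast
  have lim: "(\<lambda>n. max \<bar>X n - x0\<bar> \<bar>Y n - x0\<bar>) \<longlonglongrightarrow> 0"
    using tendsto_max[OF tend_abs0[OF assms(1)] tend_abs0[OF assms(2)]] by simp
  have "\<xi> \<longlonglongrightarrow> x0" by (rule tend_sq[OF lim]) (use \<xi> in blast)
  thus ?thesis using \<xi> by blast
qed

lemma cross_seq:
  assumes "X1 \<longlonglongrightarrow> x0" "X2 \<longlonglongrightarrow> x0" "X3 \<longlonglongrightarrow> x0"
    "\<forall>n. \<bar>X1 n - x0\<bar> < d0" "\<forall>n. \<bar>X2 n - x0\<bar> < d0" "\<forall>n. \<bar>X3 n - x0\<bar> < d0"
    "\<forall>n. X1 n \<noteq> X2 n" "\<forall>n. X1 n \<noteq> X3 n" "\<forall>n. X2 n \<noteq> X3 n"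
  shows "\<exists>\<xi>. \<xi> \<longlonglongrightarrow> x0 \<and> (\<forall>n. \<bar>\<xi> n - x0\<bar> < d0) \<and> (\<forall>n.
     (X2 n - X1 n)*(A (X3 n) - A (X1 n)) - (X3 n - X1 n)*(A (X2 n) - A (X1 n))
       = (X2 n - X1 n)*(X3 n - X1 n)*(X3 n - X2 n) * (deriv (deriv A) (\<xi> n) / 2))"
proof -
  define M where "M = (\<lambda>n. max \<bar>X1 n - x0\<bar> (max \<bar>X2 n - x0\<bar> \<bar>X3 n - x0\<bar>))"
  have "\<forall>n. \<exists>\<xi>. \<bar>\<xi> - x0\<bar> \<le> M n \<and>
     (X2 n - X1 n)*(A (X3 n) - A (X1 n)) - (X3 n - X1 n)*(A (X2 n) - A (X1 n))
       = (X2 n - X1 n)*(X3 n - X1 n)*(X3 n - X2 n) * (deriv (deriv A) \<xi> / 2)"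
  proof (rule allI)
    fix n show "\<exists>\<xi>. \<bar>\<xi> - x0\<bar> \<le> M n \<and>
     (X2 n - X1 n)*(A (X3 n) - A (X1 n)) - (X3 n - X1 n)*(A (X2 n) - A (X1 n))
       = (X2 n - X1 n)*(X3 n - X1 n)*(X3 n - X2 n) * (deriv (deriv A) \<xi> / 2)"
      unfolding M_def by (rule cross_pt) (use assms(4-9) in auto)
  qed
  from choice[OF this] obtain \<xi> where \<xi>: "\<forall>n. \<bar>\<xi> n - x0\<bar> \<le> M n \<and>
     (X2 n - X1 n)*(A (X3 n) - A (X1 n)) - (X3 n - X1 n)*(A (X2 n) - A (X1 n))
       = (X2 n - X1 n)*(X3 n - X1 n)*(X3 n - X2 n) * (deriv (deriv A) (\<xi> n) / 2)"
    by blast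
  have lim: "M \<longlonglongrightarrow> 0" unfolding M_def
    using tendsto_max[OF tend_abs0[OF assms(1)] tendsto_max[OF tend_abs0[OF assms(2)] tend_abs0[OF assms(3)]]]
    by simp
  have "\<xi> \<longlonglongrightarrow> x0" by (rule tend_sq[OF lim]) (use \<xi> in blast)
  moreover have "\<forall>n. \<bar>\<xi> n - x0\<bar> < d0"
  proof
    fix n have "M n < d0" unfolding M_def using assms(4-6) by auto
    moreover have "\<bar>\<xi> n - x0\<bar> \<le> M n" using \<xi> by blast
    ultimately show "\<bar>\<xi> n - x0\<bar> < d0" by linarith
  qed
  ultimately show ?thesis using \<xi> by blast
qed

lemma sfun_lim:
  assumes "X \<longlonglongrightarrow> x0"
  shows "(\<lambda>n. sfun A (X n)) \<longlonglongrightarrow> sfun A x0"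
  unfolding sfun_def by (intro tendsto_intros isCont_tendsto_compose[OF cont1 assms])

lemma slope_lim:
  assumes "X \<longlonglongrightarrow> x0" "Y \<longlonglongrightarrow> x0" "\<forall>n. \<bar>X n - x0\<bar> < d0" "\<forall>n. \<bar>Y n - x0\<bar> < d0"
    "\<forall>n. X n \<noteq> Y n"
  shows "(\<lambda>n. (A (Y n) - A (X n)) / (Y n - X n)) \<longlonglongrightarrow> deriv A x0"
proof -
  obtain \<xi> where \<xi>: "\<xi> \<longlonglongrightarrow> x0" "\<forall>n. A (Y n) = A (X n) + deriv A (X n) * (Y n - X n)
            + deriv (deriv A) (\<xi> n) / 2 * (Y n - X n)^2"
    using taylor_seq[OF assms] by blast
  have eq: "(A (Y n) - A (X n)) / (Y n - X n) = deriv A (X n) + deriv (deriv A) (\<xi> n) / 2 * (Y n - X n)" for n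
    using slope_taylor[of "A (Y n)" "A (X n)" "deriv A (X n)" "Y n" "X n" "deriv (deriv A) (\<xi> n)"] \<xi>(2) assms(5)
    by auto
  have "(\<lambda>n. deriv A (X n) + deriv (deriv A) (\<xi> n) / 2 * (Y n - X n)) \<longlonglongrightarrow>
      deriv A x0 + deriv (deriv A) x0 / 2 * (x0 - x0)"
    by (intro tendsto_intros isCont_tendsto_compose[OF cont1 assms(1)] isCont_tendsto_compose[OF cont2 \<xi>(1)] assms(1,2)) auto
  thus ?thesis unfolding eq by simp
qed

lemma rk_lim:
  assumes "X \<longlonglongrightarrow> x0" "Y \<longlonglongrightarrow> x0" "\<forall>n. \<bar>X n - x0\<bar> < d0" "\<forall>n. \<bar>Y n - x0\<bar> < d0"
    "\<forall>n. X n \<noteq> Y n"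
  shows "(\<lambda>n. RK A (X n) (Y n)) \<longlonglongrightarrow> deriv (deriv A) x0 / 2 / (sfun A x0 * (1 + (deriv A x0)^2))"
proof -
  obtain \<xi> where \<xi>: "\<xi> \<longlonglongrightarrow> x0" "\<forall>n. A (Y n) = A (X n) + deriv A (X n) * (Y n - X n)
            + deriv (deriv A) (\<xi> n) / 2 * (Y n - X n)^2"
    using taylor_seq[OF assms] by blast
  have eq: "RK A (X n) (Y n) = deriv (deriv A) (\<xi> n) / 2 /
      (sfun A (X n) * (1 + (deriv A (X n) + deriv (deriv A) (\<xi> n) / 2 * (Y n - X n))^2))" for n
    unfolding RK_def using \<xi>(2) assms(5) by (intro rk_taylor2) auto
  have "(\<lambda>n. deriv (deriv A) (\<xi> n) / 2 /
      (sfun A (X n) * (1 + (deriv A (X n) + deriv (deriv A) (\<xi> n) / 2 * (Y n - X n))^2))) \<longlonglongrightarrow>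
      deriv (deriv A) x0 / 2 / (sfun A x0 * (1 + (deriv A x0 + deriv (deriv A) x0 / 2 * (x0 - x0))^2))"
    using sfun_pos[of A x0]
    by (intro tendsto_intros isCont_tendsto_compose[OF cont1 assms(1)] isCont_tendsto_compose[OF cont2 \<xi>(1)]
        assms(1,2) sfun_lim) (auto simp: onesq_ne)
  thus ?thesis unfolding eq by simp
qed

lemma main_seq:
  assumes l1: "X1 \<longlonglongrightarrow> x0" and l2: "X2 \<longlonglongrightarrow> x0" and l3: "X3 \<longlonglongrightarrow> x0"
    and b1: "\<forall>n. \<bar>X1 n - x0\<bar> < d0" and b2: "\<forall>n. \<bar>X2 n - x0\<bar> < d0" and b3: "\<forall>n. \<bar>X3 n - x0\<bar> < d0"
    and d12: "\<forall>n. X1 n \<noteq> X2 n" and d13: "\<forall>n. X1 n \<noteq> X3 n" and d23: "\<forall>n. X2 n \<noteq> X3 n"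
  shows "(\<lambda>n. (menger (gpt A (X1 n)) (gpt A (X2 n)) (gpt A (X3 n)))^2 - (deriv (deriv A) x0 / (sfun A x0)^3)^2) \<longlonglongrightarrow> 0"
    "(\<lambda>n. 2*(RK A (X1 n) (X2 n) * RK A (X1 n) (X3 n) + RK A (X2 n) (X1 n) * RK A (X2 n) (X3 n)
              + RK A (X3 n) (X1 n) * RK A (X3 n) (X2 n))
          - 3/2 * (menger (gpt A (X1 n)) (gpt A (X2 n)) (gpt A (X3 n)))^2) \<longlonglongrightarrow> 0"
    "(\<lambda>n. 2*(IK A (X1 n) (X2 n) * IK A (X1 n) (X3 n) + IK A (X2 n) (X1 n) * IK A (X2 n) (X3 n)
              + IK A (X3 n) (X1 n) * IK A (X3 n) (X2 n))
          + 1/2 * (menger (gpt A (X1 n)) (gpt A (X2 n)) (gpt A (X3 n)))^2) \<longlonglongrightarrow> 0"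
proof -
  define a0 where "a0 = deriv A x0"
  define b0 where "b0 = deriv (deriv A) x0"
  define s0 where "s0 = sfun A x0"
  define c2 where "c2 = (\<lambda>n. (menger (gpt A (X1 n)) (gpt A (X2 n)) (gpt A (X3 n)))^2)"
  define SR where "SR = (\<lambda>n. 2*(RK A (X1 n) (X2 n) * RK A (X1 n) (X3 n) + RK A (X2 n) (X1 n) * RK A (X2 n) (X3 n)
              + RK A (X3 n) (X1 n) * RK A (X3 n) (X2 n)))"
  define SI where "SI = (\<lambda>n. 2*(IK A (X1 n) (X2 n) * IK A (X1 n) (X3 n) + IK A (X2 n) (X1 n) * IK A (X2 n) (X3 n)
              + IK A (X3 n) (X1 n) * IK A (X3 n) (X2 n)))"
  define M12 where "M12 = (\<lambda>n. (A (X2 n) - A (X1 n)) / (X2 n - X1 n))"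
  define M13 where "M13 = (\<lambda>n. (A (X3 n) - A (X1 n)) / (X3 n - X1 n))"
  define M23 where "M23 = (\<lambda>n. (A (X3 n) - A (X2 n)) / (X3 n - X2 n))"
  define L where "L = b0 / 2 / (s0 * (1 + a0^2))"
  define \<kappa>2 where "\<kappa>2 = (b0 / s0^3)^2"
  have s0: "s0 > 0" "s0^2 = 1 + a0^2" unfolding s0_def a0_def by (rule sfun_pos, rule sfun_sq)
  obtain \<xi> where \<xi>: "\<xi> \<longlonglongrightarrow> x0" "\<forall>n. \<bar>\<xi> n - x0\<bar> < d0" "\<forall>n.
     (X2 n - X1 n)*(A (X3 n) - A (X1 n)) - (X3 n - X1 n)*(A (X2 n) - A (X1 n))
       = (X2 n - X1 n)*(X3 n - X1 n)*(X3 n - X2 n) * (deriv (deriv A) (\<xi> n) / 2)"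
    using cross_seq[OF l1 l2 l3 b1 b2 b3 d12 d13 d23] by blast
  have c2lag: "c2 n = 4*((X2 n - X1 n)*(A (X3 n) - A (X1 n)) - (A (X2 n) - A (X1 n))*(X3 n - X1 n))^2 /
      (((X2 n - X1 n)^2+(A (X2 n) - A (X1 n))^2)*((X3 n - X1 n)^2+(A (X3 n) - A (X1 n))^2)
        *((X3 n - X2 n)^2+(A (X3 n) - A (X2 n))^2))"
    and c2K: "c2 n = 4*(deriv (deriv A) (\<xi> n) / 2)^2/((1+(M12 n)^2)*(1+(M13 n)^2)*(1+(M23 n)^2))" for n
  proof -
    have cr: "(X2 n - X1 n)*(A (X3 n) - A (X1 n)) - (A (X2 n) - A (X1 n))*(X3 n - X1 n)
       = (X2 n - X1 n)*(X3 n - X1 n)*(X3 n - X2 n) * (deriv (deriv A) (\<xi> n) / 2)"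
      using \<xi>(3) by (simp add: mult.commute)
    have "deriv (deriv A) (\<xi> n) \<noteq> 0" using nz \<xi>(2) by blast
    hence crnz: "(X2 n - X1 n)*(A (X3 n) - A (X1 n)) - (A (X2 n) - A (X1 n))*(X3 n - X1 n) \<noteq> 0"
      unfolding cr using spec[OF d12, of n] spec[OF d13, of n] spec[OF d23, of n] by auto
    have mf: "(menger (gpt A (X1 n)) (gpt A (X2 n)) (gpt A (X3 n)))^2 =
      4*((X2 n - X1 n)*(A (X3 n) - A (X1 n)) - (A (X2 n) - A (X1 n))*(X3 n - X1 n))^2 /
      (((X2 n - X1 n)^2+(A (X2 n) - A (X1 n))^2)*((X3 n - X1 n)^2+(A (X3 n) - A (X1 n))^2)
        *((X3 n - X2 n)^2+(A (X3 n) - A (X2 n))^2))"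
      using menger_formula[of "gpt A (X2 n)" "gpt A (X1 n)" "gpt A (X3 n)"] crnz
      by (simp add: gpt_def cmod_power2)
    show "c2 n = 4*((X2 n - X1 n)*(A (X3 n) - A (X1 n)) - (A (X2 n) - A (X1 n))*(X3 n - X1 n))^2 /
      (((X2 n - X1 n)^2+(A (X2 n) - A (X1 n))^2)*((X3 n - X1 n)^2+(A (X3 n) - A (X1 n))^2)
        *((X3 n - X2 n)^2+(A (X3 n) - A (X2 n))^2))" unfolding c2_def mf ..
    show "c2 n = 4*(deriv (deriv A) (\<xi> n) / 2)^2/((1+(M12 n)^2)*(1+(M13 n)^2)*(1+(M23 n)^2))"
      unfolding c2_def mf M12_def M13_def M23_def
      by (rule c2_alg[OF _ _ _ cr]) (use d12 d13 d23 in auto)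
  qed
  \<comment> \<open>Melnikov identity\<close>
  have mel: "SR n + SI n = c2 n" for n
  proof -
    have p: "RK A x y * RK A x z + IK A x y * IK A x z =
       ((x-y)*(x-z) + (A x - A y)*(A x - A z))/(((x-y)^2+(A x - A y)^2)*((x-z)^2+(A x - A z)^2))"
      if "x \<noteq> y" "x \<noteq> z" for x y z
      unfolding RK_def IK_def by (rule pair_id[OF sfun_sq sfun_pos that])
    have "SR n + SI n = 2*(
        (RK A (X1 n) (X2 n) * RK A (X1 n) (X3 n) + IK A (X1 n) (X2 n) * IK A (X1 n) (X3 n))
      + (RK A (X2 n) (X1 n) * RK A (X2 n) (X3 n) + IK A (X2 n) (X1 n) * IK A (X2 n) (X3 n))
      + (RK A (X3 n) (X1 n) * RK A (X3 n) (X2 n) + IK A (X3 n) (X1 n) * IK A (X3 n) (X2 n)))"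
      unfolding SR_def SI_def by (simp add: algebra_simps)
    also have "\<dots> = c2 n"
    proof -
      have n: "X1 n \<noteq> X2 n" "X1 n \<noteq> X3 n" "X2 n \<noteq> X3 n" using d12 d13 d23 by auto
      show ?thesis unfolding c2lag p[OF n(1) n(2)] p[OF n(1)[symmetric] n(3)] p[OF n(2)[symmetric] n(3)[symmetric]]
        by (rule lagrange_sum[OF n])
    qed
    finally show ?thesis .
  qed
  have bl: "(\<lambda>n. deriv (deriv A) (\<xi> n)) \<longlonglongrightarrow> b0" unfolding b0_def
    by (rule isCont_tendsto_compose[OF cont2 \<xi>(1)])
  have m12: "M12 \<longlonglongrightarrow> a0" unfolding M12_def a0_def by (rule slope_lim[OF l1 l2 b1 b2 d12])
  have m13: "M13 \<longlonglongrightarrow> a0" unfolding M13_def a0_def by (rule slope_lim[OF l1 l3 b1 b3 d13])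
  have m23: "M23 \<longlonglongrightarrow> a0" unfolding M23_def a0_def by (rule slope_lim[OF l2 l3 b2 b3 d23])
  have nz3: "(1 + a0^2) * (1 + a0^2) * (1 + a0^2) \<noteq> 0"
  proof -
    have "(1 + a0^2) > 0" by (simp add: add_pos_nonneg)
    hence "(1 + a0^2) * (1 + a0^2) * (1 + a0^2) > 0" by simp
    thus ?thesis by linarith
  qed
  have c2l: "c2 \<longlonglongrightarrow> 4*(b0/2)^2/((1+a0^2)*(1+a0^2)*(1+a0^2))"
  proof -
    have "(\<lambda>n. 4*(deriv (deriv A) (\<xi> n) / 2)^2/((1+(M12 n)^2)*(1+(M13 n)^2)*(1+(M23 n)^2)))
       \<longlonglongrightarrow> 4*(b0/2)^2/((1+a0^2)*(1+a0^2)*(1+a0^2))"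
      by (intro tendsto_intros bl m12 m13 m23) (simp_all only: nz3 onesq_ne zero_neq_numeral[symmetric] not_False_eq_True)
    thus ?thesis using c2K by (simp add: c2K[abs_def])
  qed
  have k2: "4*(b0/2)^2/((1+a0^2)*(1+a0^2)*(1+a0^2)) = \<kappa>2"
  proof -
    have e1: "(s0^3)^2 = (s0^2)^3" by (simp flip: power_mult)
    have e2: "(s0^2)^3 = (1+a0^2)*(1+a0^2)*(1+a0^2)" unfolding s0(2) by (simp add: power3_eq_cube)
    have "\<kappa>2 = b0^2/(s0^3)^2" unfolding \<kappa>2_def by (simp add: power_divide)
    also have "\<dots> = b0^2/((1+a0^2)*(1+a0^2)*(1+a0^2))" unfolding e1 e2 ..
    also have "\<dots> = 4*(b0/2)^2/((1+a0^2)*(1+a0^2)*(1+a0^2))" by (simp add: power_divide)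
    finally show ?thesis by simp
  qed
  have rk: "(\<lambda>n. RK A (X n) (Y n)) \<longlonglongrightarrow> L"
    if "X \<longlonglongrightarrow> x0" "Y \<longlonglongrightarrow> x0" "\<forall>n. \<bar>X n - x0\<bar> < d0" "\<forall>n. \<bar>Y n - x0\<bar> < d0" "\<forall>n. X n \<noteq> Y n" for X Y
    unfolding L_def a0_def b0_def s0_def using rk_lim[OF that] .
  have d21: "\<forall>n. X2 n \<noteq> X1 n" using d12 by (simp add: eq_commute)
  have d31: "\<forall>n. X3 n \<noteq> X1 n" using d13 by (simp add: eq_commute)
  have d32: "\<forall>n. X3 n \<noteq> X2 n" using d23 by (simp add: eq_commute)
  have SRl: "SR \<longlonglongrightarrow> 2*(L*L + L*L + L*L)" unfolding SR_def
    by (intro tendsto_intros rk l1 l2 l3 b1 b2 b3 d12 d13 d23 d21 d31 d32)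
  have SRv: "2*(L*L + L*L + L*L) = 3/2 * \<kappa>2"
  proof -
    have "2*(L*L + L*L + L*L) = 3/2 * (4*(b0/2)^2/((1+a0^2)*(1+a0^2)*(1+a0^2)))"
      unfolding L_def s0(2)[symmetric] using s0(1) by (simp add: field_simps power2_eq_square)
    thus ?thesis using k2 by simp
  qed
  show "(\<lambda>n. (menger (gpt A (X1 n)) (gpt A (X2 n)) (gpt A (X3 n)))^2 - (deriv (deriv A) x0 / (sfun A x0)^3)^2) \<longlonglongrightarrow> 0"
  proof -
    have "(\<lambda>n. c2 n - \<kappa>2) \<longlonglongrightarrow> \<kappa>2 - \<kappa>2" using c2l k2 by (intro tendsto_intros) simp
    thus ?thesis unfolding c2_def \<kappa>2_def b0_def s0_def by simp
  qed
  have g2: "(\<lambda>n. SR n - 3/2 * c2 n) \<longlonglongrightarrow> 0"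
  proof -
    have c2k: "c2 \<longlonglongrightarrow> \<kappa>2" using c2l k2 by simp
    have "(\<lambda>n. SR n - 3/2 * c2 n) \<longlonglongrightarrow> 2*(L*L + L*L + L*L) - 3/2*\<kappa>2"
      by (intro tendsto_intros SRl c2k)
    thus ?thesis unfolding SRv by simp
  qed
  thus "(\<lambda>n. 2*(RK A (X1 n) (X2 n) * RK A (X1 n) (X3 n) + RK A (X2 n) (X1 n) * RK A (X2 n) (X3 n)
              + RK A (X3 n) (X1 n) * RK A (X3 n) (X2 n))
          - 3/2 * (menger (gpt A (X1 n)) (gpt A (X2 n)) (gpt A (X3 n)))^2) \<longlonglongrightarrow> 0"
    unfolding SR_def c2_def by simp
  have "(\<lambda>n. SI n + 1/2 * c2 n) = (\<lambda>n. - (SR n - 3/2 * c2 n))"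
  proof
    fix n have "SI n = c2 n - SR n" using mel[of n] by linarith
    thus "SI n + 1/2 * c2 n = - (SR n - 3/2 * c2 n)" by simp
  qed
  moreover have "(\<lambda>n. - (SR n - 3/2 * c2 n)) \<longlonglongrightarrow> - 0" by (intro tendsto_intros g2)
  ultimately show "(\<lambda>n. 2*(IK A (X1 n) (X2 n) * IK A (X1 n) (X3 n) + IK A (X2 n) (X1 n) * IK A (X2 n) (X3 n)
              + IK A (X3 n) (X1 n) * IK A (X3 n) (X2 n))
          + 1/2 * (menger (gpt A (X1 n)) (gpt A (X2 n)) (gpt A (X3 n)))^2) \<longlonglongrightarrow> 0"
    unfolding SI_def c2_def by simp
qed

lemma main_ev:
  assumes l1: "X1 \<longlonglongrightarrow> x0" and l2: "X2 \<longlonglongrightarrow> x0" and l3: "X3 \<longlonglongrightarrow> x0"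
    and b1: "\<forall>n. \<bar>X1 n - x0\<bar> < d0" and b2: "\<forall>n. \<bar>X2 n - x0\<bar> < d0" and b3: "\<forall>n. \<bar>X3 n - x0\<bar> < d0"
    and d12: "\<forall>n. X1 n \<noteq> X2 n" and d13: "\<forall>n. X1 n \<noteq> X3 n" and d23: "\<forall>n. X2 n \<noteq> X3 n"
    and e: "\<epsilon> > 0"
  shows "eventually (\<lambda>n.
       \<bar>(menger (gpt A (X1 n)) (gpt A (X2 n)) (gpt A (X3 n)))^2 - (deriv (deriv A) x0 / (sfun A x0)^3)^2\<bar> < \<epsilon> \<and>
       cmod (Sop (\<lambda>w z. complex_of_real (Re (KGamma A w z))) (gpt A (X1 n)) (gpt A (X2 n)) (gpt A (X3 n))
             - of_real (3/2 * (menger (gpt A (X1 n)) (gpt A (X2 n)) (gpt A (X3 n)))^2)) < \<epsilon> \<and>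
       cmod (Sop (\<lambda>w z. complex_of_real (Im (KGamma A w z))) (gpt A (X1 n)) (gpt A (X2 n)) (gpt A (X3 n))
             + of_real (1/2 * (menger (gpt A (X1 n)) (gpt A (X2 n)) (gpt A (X3 n)))^2)) < \<epsilon>) sequentially"
proof -
  note M = main_seq[OF l1 l2 l3 b1 b2 b3 d12 d13 d23]
  have ev: "eventually (\<lambda>n. \<bar>f n\<bar> < \<epsilon>) sequentially" if "f \<longlonglongrightarrow> 0" for f :: "nat \<Rightarrow> real"
    using that e unfolding tendsto_iff by (auto simp: dist_real_def)
  have sR: "Sop (\<lambda>w z. complex_of_real (Re (KGamma A w z))) (gpt A x1) (gpt A x2) (gpt A x3)
     = complex_of_real (2*(RK A x1 x2 * RK A x1 x3 + RK A x2 x1 * RK A x2 x3 + RK A x3 x1 * RK A x3 x2))"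
    for x1 x2 x3 using Sop_real[of "\<lambda>w z. Re (KGamma A w z)"] by (simp add: KRe)
  have sI: "Sop (\<lambda>w z. complex_of_real (Im (KGamma A w z))) (gpt A x1) (gpt A x2) (gpt A x3)
     = complex_of_real (2*(IK A x1 x2 * IK A x1 x3 + IK A x2 x1 * IK A x2 x3 + IK A x3 x1 * IK A x3 x2))"
    for x1 x2 x3 using Sop_real[of "\<lambda>w z. Im (KGamma A w z)"] by (simp add: KIm)
  have c1: "cmod (complex_of_real a - complex_of_real b) = \<bar>a - b\<bar>" for a b
    by (metis norm_of_real of_real_diff)
  have c2: "cmod (complex_of_real a + complex_of_real b) = \<bar>a + b\<bar>" for a b
    by (metis norm_of_real of_real_add)
  show ?thesis
    using eventually_conj[OF ev[OF M(1)] eventually_conj[OF ev[OF M(2)] ev[OF M(3)]]]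
    unfolding sR sI c1 c2 by simp
qed
end

theorem theorem1p1:
  fixes A :: "real \<Rightarrow> real" and J :: "real set" and x0 :: real
  assumes "open J" and "is_interval J" and "J \<noteq> {}"
    and "C3_on J A" and "x0 \<in> J" and "deriv (deriv A) x0 \<noteq> 0"
  shows "\<forall>\<epsilon>>0. \<exists>\<delta>>0. {x0 - \<delta> <..< x0 + \<delta>} \<subseteq> J \<and>
     (\<forall>z1 z2 z3. z1 \<in> gpt A ` {x0 - \<delta> <..< x0 + \<delta>} \<and> z2 \<in> gpt A ` {x0 - \<delta> <..< x0 + \<delta>}
        \<and> z3 \<in> gpt A ` {x0 - \<delta> <..< x0 + \<delta>} \<and> z1 \<noteq> z2 \<and> z1 \<noteq> z3 \<and> z2 \<noteq> z3 \<longrightarrow>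
       \<bar>(menger z1 z2 z3)^2 - (deriv (deriv A) x0 / (sfun A x0)^3)^2\<bar> < \<epsilon> \<and>
       cmod (Sop (\<lambda>w z. complex_of_real (Re (KGamma A w z))) z1 z2 z3
             - of_real (3/2 * (menger z1 z2 z3)^2)) < \<epsilon> \<and>
       cmod (Sop (\<lambda>w z. complex_of_real (Im (KGamma A w z))) z1 z2 z3
             + of_real (1/2 * (menger z1 z2 z3)^2)) < \<epsilon>)"
proof (intro allI impI)
  fix \<epsilon> :: real assume e: "\<epsilon> > 0"
  define b0 where "b0 = deriv (deriv A) x0"
  obtain d1 where d1: "d1 > 0" "ball x0 d1 \<subseteq> J" using assms(1,5) openE by blast
  have "isCont (deriv (deriv A)) x0"
  proof -
    have "deriv (deriv A) differentiable (at x0)" using assms(4,5) unfolding C3_on_def by blast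
    thus ?thesis by (simp add: differentiable_imp_continuous_within)
  qed
  hence L: "\<forall>r>0. \<exists>s>0. \<forall>x. x \<noteq> x0 \<and> norm (x - x0) < s \<longrightarrow> norm (deriv (deriv A) x - b0) < r"
    unfolding isCont_def b0_def LIM_eq .
  have pos: "\<bar>b0\<bar> > 0" using assms(6) unfolding b0_def by simp
  obtain d2 where d2: "d2 > 0" "\<forall>x. x \<noteq> x0 \<and> \<bar>x - x0\<bar> < d2 \<longrightarrow> \<bar>deriv (deriv A) x - b0\<bar> < \<bar>b0\<bar>"
    using L[rule_format, OF pos] by auto
  define d0 where "d0 = min d1 d2"
  have d0: "d0 > 0" unfolding d0_def using d1 d2 by simp
  have inJ: "t \<in> J" if "\<bar>t - x0\<bar> < d0" for t
  proof -
    have "dist x0 t < d1" using that unfolding d0_def dist_real_def by (simp add: abs_minus_commute)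
    thus ?thesis using d1(2) by auto
  qed
  have nzt: "deriv (deriv A) t \<noteq> 0" if "\<bar>t - x0\<bar> < d0" for t
  proof (cases "t = x0")
    case True thus ?thesis using assms(6) by simp
  next
    case False
    hence "\<bar>deriv (deriv A) t - b0\<bar> < \<bar>b0\<bar>" using d2(2) that unfolding d0_def by auto
    thus ?thesis by auto
  qed
  interpret cset A J x0 d0 using assms(4) d0 inJ nzt by unfold_locales auto
  define G where "G = (\<lambda>z1 z2 z3.
       \<bar>(menger z1 z2 z3)^2 - (deriv (deriv A) x0 / (sfun A x0)^3)^2\<bar> < \<epsilon> \<and>
       cmod (Sop (\<lambda>w z. complex_of_real (Re (KGamma A w z))) z1 z2 z3
             - of_real (3/2 * (menger z1 z2 z3)^2)) < \<epsilon> \<and>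
       cmod (Sop (\<lambda>w z. complex_of_real (Im (KGamma A w z))) z1 z2 z3
             + of_real (1/2 * (menger z1 z2 z3)^2)) < \<epsilon>)"
  define Hs where "Hs = (\<lambda>\<delta> z1 z2 z3. z1 \<in> gpt A ` {x0 - \<delta> <..< x0 + \<delta>} \<and> z2 \<in> gpt A ` {x0 - \<delta> <..< x0 + \<delta>}
        \<and> z3 \<in> gpt A ` {x0 - \<delta> <..< x0 + \<delta>} \<and> z1 \<noteq> z2 \<and> z1 \<noteq> z3 \<and> z2 \<noteq> z3)"
  have key: "\<exists>\<delta>>0. {x0 - \<delta> <..< x0 + \<delta>} \<subseteq> J \<and> (\<forall>z1 z2 z3. Hs \<delta> z1 z2 z3 \<longrightarrow> G z1 z2 z3)"
  proof (rule ccontr)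
    assume neg: "\<not> (\<exists>\<delta>>0. {x0 - \<delta> <..< x0 + \<delta>} \<subseteq> J \<and> (\<forall>z1 z2 z3. Hs \<delta> z1 z2 z3 \<longrightarrow> G z1 z2 z3))"
    define \<delta> where "\<delta> = (\<lambda>n::nat. d0 / real (Suc n))"
    have \<delta>pos: "\<delta> n > 0" for n unfolding \<delta>_def using d0 by simp
    have \<delta>le: "\<delta> n \<le> d0" for n unfolding \<delta>_def using d0 by (simp add: divide_le_eq)
    have lt: "\<bar>u - x0\<bar> < d0" if "\<bar>u - x0\<bar> < \<delta> n" for u n using that \<delta>le[of n] by linarith
    have S: "{x0 - \<delta> n <..< x0 + \<delta> n} \<subseteq> J" for n
    proof
      fix t assume "t \<in> {x0 - \<delta> n <..< x0 + \<delta> n}"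
      hence "\<bar>t - x0\<bar> < \<delta> n" by auto
      thus "t \<in> J" by (intro inJ lt)
    qed
    have "\<forall>n. \<exists>t::real\<times>real\<times>real. \<bar>fst t - x0\<bar> < \<delta> n \<and> \<bar>fst (snd t) - x0\<bar> < \<delta> n \<and> \<bar>snd (snd t) - x0\<bar> < \<delta> n
       \<and> fst t \<noteq> fst (snd t) \<and> fst t \<noteq> snd (snd t) \<and> fst (snd t) \<noteq> snd (snd t)
       \<and> \<not> G (gpt A (fst t)) (gpt A (fst (snd t))) (gpt A (snd (snd t)))"
    proof
      fix n
      have "\<not> (\<forall>z1 z2 z3. Hs (\<delta> n) z1 z2 z3 \<longrightarrow> G z1 z2 z3)"
        using neg \<delta>pos[of n] S[of n] by blast
      then obtain z1 z2 z3 where H: "Hs (\<delta> n) z1 z2 z3" "\<not> G z1 z2 z3"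
        by blast
      then obtain x1 x2 x3 where x: "x1 \<in> {x0 - \<delta> n <..< x0 + \<delta> n}" "z1 = gpt A x1"
        "x2 \<in> {x0 - \<delta> n <..< x0 + \<delta> n}" "z2 = gpt A x2" "x3 \<in> {x0 - \<delta> n <..< x0 + \<delta> n}" "z3 = gpt A x3"
        unfolding Hs_def by blast
      have "x1 \<noteq> x2" "x1 \<noteq> x3" "x2 \<noteq> x3" using H(1) x unfolding Hs_def by auto
      moreover have "\<bar>x1 - x0\<bar> < \<delta> n" "\<bar>x2 - x0\<bar> < \<delta> n" "\<bar>x3 - x0\<bar> < \<delta> n" using x by auto
      ultimately show "\<exists>t::real\<times>real\<times>real. \<bar>fst t - x0\<bar> < \<delta> n \<and> \<bar>fst (snd t) - x0\<bar> < \<delta> n \<and> \<bar>snd (snd t) - x0\<bar> < \<delta> n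
       \<and> fst t \<noteq> fst (snd t) \<and> fst t \<noteq> snd (snd t) \<and> fst (snd t) \<noteq> snd (snd t)
       \<and> \<not> G (gpt A (fst t)) (gpt A (fst (snd t))) (gpt A (snd (snd t)))"
        using H(2) x by (intro exI[of _ "(x1, x2, x3)"]) simp
    qed
    from choice[OF this] obtain T where T: "\<forall>n. \<bar>fst (T n) - x0\<bar> < \<delta> n \<and> \<bar>fst (snd (T n)) - x0\<bar> < \<delta> n
       \<and> \<bar>snd (snd (T n)) - x0\<bar> < \<delta> n
       \<and> fst (T n) \<noteq> fst (snd (T n)) \<and> fst (T n) \<noteq> snd (snd (T n)) \<and> fst (snd (T n)) \<noteq> snd (snd (T n))
       \<and> \<not> G (gpt A (fst (T n))) (gpt A (fst (snd (T n)))) (gpt A (snd (snd (T n))))"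
      by blast
    define X1 where "X1 = (\<lambda>n. fst (T n))"
    define X2 where "X2 = (\<lambda>n. fst (snd (T n)))"
    define X3 where "X3 = (\<lambda>n. snd (snd (T n)))"
    have \<delta>lim: "\<delta> \<longlonglongrightarrow> 0"
    proof -
      have "(\<lambda>n. d0 * inverse (real (Suc n))) \<longlonglongrightarrow> d0 * 0"
        by (intro tendsto_intros LIMSEQ_inverse_real_of_nat)
      thus ?thesis unfolding \<delta>_def by (simp add: divide_inverse)
    qed
    have bd: "\<forall>n. \<bar>X1 n - x0\<bar> < \<delta> n" "\<forall>n. \<bar>X2 n - x0\<bar> < \<delta> n" "\<forall>n. \<bar>X3 n - x0\<bar> < \<delta> n"
      using T unfolding X1_def X2_def X3_def by blast+
    have lim: "X1 \<longlonglongrightarrow> x0" "X2 \<longlonglongrightarrow> x0" "X3 \<longlonglongrightarrow> x0"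
      using bd by (auto intro!: tend_sq[OF \<delta>lim] less_imp_le)
    have bd0: "\<forall>n. \<bar>X1 n - x0\<bar> < d0" "\<forall>n. \<bar>X2 n - x0\<bar> < d0" "\<forall>n. \<bar>X3 n - x0\<bar> < d0"
      using bd by (blast intro: lt)+
    have ds: "\<forall>n. X1 n \<noteq> X2 n" "\<forall>n. X1 n \<noteq> X3 n" "\<forall>n. X2 n \<noteq> X3 n"
      using T unfolding X1_def X2_def X3_def by blast+
    have nG: "\<forall>n. \<not> G (gpt A (X1 n)) (gpt A (X2 n)) (gpt A (X3 n))"
      using T unfolding X1_def X2_def X3_def by blast
    have "eventually (\<lambda>n. G (gpt A (X1 n)) (gpt A (X2 n)) (gpt A (X3 n))) sequentially"
      unfolding G_def by (rule main_ev[OF lim bd0 ds e])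
    then obtain N where "\<forall>n\<ge>N. G (gpt A (X1 n)) (gpt A (X2 n)) (gpt A (X3 n))"
      unfolding eventually_sequentially by blast
    hence "G (gpt A (X1 N)) (gpt A (X2 N)) (gpt A (X3 N))" by blast
    thus False using nG by blast
  qed
  thus "\<exists>\<delta>>0. {x0 - \<delta> <..< x0 + \<delta>} \<subseteq> J \<and>
     (\<forall>z1 z2 z3. z1 \<in> gpt A ` {x0 - \<delta> <..< x0 + \<delta>} \<and> z2 \<in> gpt A ` {x0 - \<delta> <..< x0 + \<delta>}
        \<and> z3 \<in> gpt A ` {x0 - \<delta> <..< x0 + \<delta>} \<and> z1 \<noteq> z2 \<and> z1 \<noteq> z3 \<and> z2 \<noteq> z3 \<longrightarrow>
       \<bar>(menger z1 z2 z3)^2 - (deriv (deriv A) x0 / (sfun A x0)^3)^2\<bar> < \<epsilon> \<and>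
       cmod (Sop (\<lambda>w z. complex_of_real (Re (KGamma A w z))) z1 z2 z3
             - of_real (3/2 * (menger z1 z2 z3)^2)) < \<epsilon> \<and>
       cmod (Sop (\<lambda>w z. complex_of_real (Im (KGamma A w z))) z1 z2 z3
             + of_real (1/2 * (menger z1 z2 z3)^2)) < \<epsilon>)"
    unfolding G_def Hs_def .
qed

end
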